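(* Let $c \in \mathbb{Z}$ with $c \equiv 1 \pmod 4$. Fix an algebraic closure $\overline{\mathbb{Q}}_2$ of $\mathbb{Q}_2$, an element $\delta \in \overline{\mathbb{Q}}_2$ with $\delta^2 = -c$, and elements $\alpha, \beta \in \overline{\mathbb{Q}}_2$ with $\alpha^2 = -c + \delta$ and $\beta^2 = -c - \delta$. Let $L_c = \mathbb{Q}_2(\alpha,\beta)$, and let $v_\pi$ be the valuation on $L_c$ normalized so that $v_\pi(2) = 8$. Then for every choice of signs, $v_\pi(\pm\alpha \pm \alpha\beta \pm \beta) = 6$.
   Context: For $c \equiv 1 \pmod 4$, the extension $L_c/\mathbb{Q}_2$ is totally ramified of degree $8$, so $v_\pi$ is the normalized valuation associated to a uniformizer of $L_c$, and $v_\pi(x) = 8 v_2(x)$ where $v_2$ is the $2$-adic valuation extended to $\overline{\mathbb{Q}}_2$. *)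

theory Defs
  imports "HOL-Computational_Algebra.Computational_Algebra"
begin

text \<open>A (rank one, real-valued) valuation on a field, given on nonzero elements,
  extending the 2-adic valuation v_2 of the rationals.  The valuation of 0 is
  +infinity by convention and is never used.\<close>
definition ext_2adic_valuation :: "('a::field \<Rightarrow> real) \<Rightarrow> bool" where
  "ext_2adic_valuation v \<longleftrightarrow>
     (\<forall>x y. x \<noteq> 0 \<longrightarrow> y \<noteq> 0 \<longrightarrow> v (x * y) = v x + v y) \<and>
     (\<forall>x y. x \<noteq> 0 \<longrightarrow> y \<noteq> 0 \<longrightarrow> x + y \<noteq> 0 \<longrightarrow> v (x + y) \<ge> min (v x) (v y)) \<and>
     (\<forall>n::int. n \<noteq> 0 \<longrightarrow> of_int n \<noteq> (0::'a) \<and> v (of_int n) = real (multiplicity (2::int) n))"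

end

theory Submission
  imports Defs
begin

lemma V_mult: "ext_2adic_valuation v \<Longrightarrow> x \<noteq> 0 \<Longrightarrow> y \<noteq> 0 \<Longrightarrow> v (x * y) = v x + v y"
  unfolding ext_2adic_valuation_def by blast

lemma V_ultra: "ext_2adic_valuation v \<Longrightarrow> x \<noteq> 0 \<Longrightarrow> y \<noteq> 0 \<Longrightarrow> x + y \<noteq> 0 \<Longrightarrow> v (x + y) \<ge> min (v x) (v y)"
  unfolding ext_2adic_valuation_def by blast

lemma V_int: "ext_2adic_valuation (v::'a::field \<Rightarrow> real) \<Longrightarrow> n \<noteq> 0 \<Longrightarrow> of_int n \<noteq> (0::'a) \<and> v (of_int n) = real (multiplicity (2::int) n)"
  unfolding ext_2adic_valuation_def by blast

lemma V_odd: "ext_2adic_valuation (v::'a::field \<Rightarrow> real) \<Longrightarrow> odd n \<Longrightarrow> of_int n \<noteq> (0::'a) \<and> v (of_int n) = 0"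
  using V_int[of v n] not_dvd_imp_multiplicity_0[of 2 n] by fastforce

lemma V_two: "ext_2adic_valuation (v::'a::field \<Rightarrow> real) \<Longrightarrow> (2::'a) \<noteq> 0 \<and> v 2 = 1"
  using V_int[of v 2] multiplicity_self[of "2::int"] by simp

lemma V_neg1: "ext_2adic_valuation (v::'a::field \<Rightarrow> real) \<Longrightarrow> v (-1) = 0"
  using V_odd[of v "-1"] by simp

lemma V_uminus: "ext_2adic_valuation (v::'a::field \<Rightarrow> real) \<Longrightarrow> x \<noteq> 0 \<Longrightarrow> v (- x) = v x"
  using V_mult[of v "-1" x] V_neg1[of v] by simp

lemma V_strict:
  assumes V: "ext_2adic_valuation (v::'a::field \<Rightarrow> real)" and a: "a \<noteq> 0" and b: "b \<noteq> 0"
    and lt: "v a < v b"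
  shows "a + b \<noteq> 0 \<and> v (a + b) = v a"
proof -
  have nz: "a + b \<noteq> 0"
  proof
    assume "a + b = 0" then have "b = - a" by (simp add: eq_neg_iff_add_eq_0 add.commute)
    then show False using lt V_uminus[OF V a] by simp
  qed
  have ge: "v (a + b) \<ge> v a" using V_ultra[OF V a b nz] lt by simp
  have "a = (a + b) + (- b)" by simp
  then have "v a \<ge> min (v (a+b)) (v (-b))"
    using V_ultra[OF V nz, of "-b"] a b by simp
  then have "v (a+b) \<le> v a" using V_uminus[OF V b] lt by linarith
  with ge nz show ?thesis by simp
qed

lemma V_sq:
  assumes V: "ext_2adic_valuation (v::'a::field \<Rightarrow> real)" and x: "x \<noteq> 0"
  shows "v (x^2) = 2 * v x"
  using V_mult[OF V x x] by (simp add: power2_eq_square)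

lemma V_split:
  assumes V: "ext_2adic_valuation (v::'a::field \<Rightarrow> real)" and a: "a \<noteq> 0" and b: "b \<noteq> 0"
    and ab: "a - b \<noteq> 0" and S: "v a + v b = S" and d: "v (a - b) \<ge> S / 2"
  shows "v a = S / 2"
proof (rule ccontr)
  assume ne: "v a \<noteq> S / 2"
  show False
  proof (cases "v a < v b")
    case True
    have "v (a + (-b)) = v a" using V_strict[OF V a, of "-b"] b V_uminus[OF V b] True by simp
    then show False using True S d by simp
  next
    case False
    then have "v b < v a" using ne S by linarith
    have "v (-b + a) = v (-b)" using V_strict[OF V, of "-b" a] b a V_uminus[OF V b] \<open>v b < v a\<close> by simp
    then have "v (a - b) = v b" using V_uminus[OF V b] by (simp add: add.commute)
    then show False using \<open>v b < v a\<close> S d by simp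
  qed
qed

theorem corollary7p2:
  fixes v :: "'a::field \<Rightarrow> real" and c :: int and \<delta> \<alpha> \<beta> :: 'a
    and s1 s2 s3 :: 'a
  assumes "ext_2adic_valuation v"
    and "c mod 4 = 1"
    and "\<delta>^2 = - of_int c"
    and "\<alpha>^2 = - of_int c + \<delta>"
    and "\<beta>^2 = - of_int c - \<delta>"
    and "s1 \<in> {1, -1}" and "s2 \<in> {1, -1}" and "s3 \<in> {1, -1}"
  shows "s1 * \<alpha> + s2 * (\<alpha> * \<beta>) + s3 * \<beta> \<noteq> 0
         \<and> 8 * v (s1 * \<alpha> + s2 * (\<alpha> * \<beta>) + s3 * \<beta>) = 6"
proof -
  note V = assms(1)
  have s1: "s1^2 = 1" "s1 \<noteq> 0" using assms(6) by auto
  have s2: "s2^2 = 1" "s2 \<noteq> 0" using assms(7) by auto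
  have s3: "s3^2 = 1" "s3 \<noteq> 0" using assms(8) by auto
  obtain k where k: "c = 4 * k + 1" using assms(2) by (metis div_mult_mod_eq add.commute mult.commute)
  have codd: "odd c" using k by presburger
  have c0: "of_int c \<noteq> (0::'a)" "v (of_int c) = 0" using V_odd[OF V codd] by auto
  have two: "(2::'a) \<noteq> 0" "v (2::'a) = 1" using V_two[OF V] by auto
  have hodd: "odd (2*k+1)" by presburger
  have h0: "of_int (2*k+1) \<noteq> (0::'a)" "v (of_int (2*k+1) :: 'a) = 0" using V_odd[OF V hodd] by auto
  have cp1: "(of_int c + 1 :: 'a) = 2 * of_int (2*k+1)" using k by simp
  have ab2: "(\<alpha> * \<beta>)^2 = of_int c * (of_int c + 1)"
  proof -
    have "(\<alpha> * \<beta>)^2 = (- of_int c + \<delta>) * (- of_int c - \<delta>)" using assms(4,5) by (simp add: power_mult_distrib)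
    also have "\<dots> = (of_int c)^2 - \<delta>^2" by (simp add: power2_eq_square algebra_simps)
    also have "\<dots> = of_int c * (of_int c + 1)" using assms(3) by (simp add: power2_eq_square algebra_simps)
    finally show ?thesis .
  qed
  have cc1: "of_int c * (of_int c + 1) \<noteq> (0::'a)" "v (of_int c * (of_int c + 1) :: 'a) = 1"
  proof -
    have e: "(of_int c * (of_int c + 1) :: 'a) = of_int c * (2 * of_int (2*k+1))" by (simp only: cp1)
    have n1: "(2 * of_int (2*k+1) :: 'a) \<noteq> 0" using two(1) h0(1) by (simp only: mult_eq_0_iff) blast
    have "v (2 * of_int (2*k+1) :: 'a) = 1" using V_mult[OF V two(1) h0(1)] two h0 by simp
    then show "of_int c * (of_int c + 1) \<noteq> (0::'a)" "v (of_int c * (of_int c + 1) :: 'a) = 1"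
      unfolding e using V_mult[OF V c0(1) n1] c0 n1 by auto
  qed
  have abnz: "\<alpha> * \<beta> \<noteq> 0" using ab2 cc1(1) by auto
  have vab: "v (\<alpha> * \<beta>) = 1/2" using V_sq[OF V abnz] ab2 cc1 by simp
  define t where "t = s1 * s3 * (\<alpha> * \<beta>)"
  define y where "y = s2 * (\<alpha> * \<beta>)"
  define x where "x = s1 * \<alpha> + s3 * \<beta>"
  have tnz: "t \<noteq> 0" using s1 s3 abnz t_def by simp
  have vt: "v t = 1/2" using V_mult[OF V _ abnz, of "s1*s3"] s1 s3 vab t_def
    V_uminus[OF V abnz] assms(6,8) by auto
  have ynz: "y \<noteq> 0" using s2 abnz y_def by simp
  have vy: "v y = 1/2" using vab y_def V_uminus[OF V abnz] assms(7) by auto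
  have v2t: "v (2*t) = 3/2" "2*t \<noteq> 0" using V_mult[OF V two(1) tnz] two vt tnz by auto
  have v2y: "v (2*y) = 3/2" "2*y \<noteq> 0" using V_mult[OF V two(1) ynz] two vy ynz by auto
  have x2: "x^2 = - 2 * of_int c + 2 * t"
  proof -
    have "x^2 = s1^2 * \<alpha>^2 + s3^2 * \<beta>^2 + 2 * t" unfolding x_def t_def
      by (simp add: power2_eq_square algebra_simps)
    also have "\<dots> = \<alpha>^2 + \<beta>^2 + 2 * t" using s1 s3 by simp
    also have "\<dots> = - 2 * of_int c + 2 * t" using assms(4,5) by simp
    finally show ?thesis .
  qed
  have m2c: "v (- 2 * of_int c :: 'a) = 1" "(- 2 * of_int c :: 'a) \<noteq> 0"
    using V_mult[OF V two(1) c0(1)] V_uminus[OF V, of "2 * of_int c"] two c0 by auto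
  have x2v: "x^2 \<noteq> 0 \<and> v (x^2) = 1"
    using V_strict[OF V m2c(2) v2t(2)] m2c v2t x2 by simp
  have xnz: "x \<noteq> 0" using x2v by auto
  have vx: "v x = 1/2" using V_sq[OF V xnz] x2v by simp
  have y2: "y^2 = of_int c * (of_int c + 1)" using ab2 s2 unfolding y_def
    by (simp add: power_mult_distrib)
  have d: "x^2 - y^2 = - (of_int c * (4 * (of_int k + 1))) + 2 * t"
    using x2 y2 k by (simp add: algebra_simps)
  have dv: "x^2 - y^2 \<noteq> 0 \<and> v (x^2 - y^2) = 3/2"
  proof (cases "k + 1 = 0")
    case True
    then have "(of_int k + 1 :: 'a) = 0" by (metis of_int_0 of_int_1 of_int_add)
    then show ?thesis using d v2t by simp
  next
    case False
    have k1: "(of_int (k+1) :: 'a) \<noteq> 0" "v (of_int (k+1) :: 'a) \<ge> 0" using V_int[OF V False] by auto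
    have four: "(4::'a) \<noteq> 0" "v (4::'a) = 2" proof -
      have e4: "(4::'a) = 2 * 2" by simp
      show "(4::'a) \<noteq> 0" unfolding e4 using two(1) by (simp only: mult_eq_0_iff) blast
      show "v (4::'a) = 2" unfolding e4 using V_mult[OF V two(1) two(1)] two by simp
    qed
    have "(4 * of_int (k+1) :: 'a) \<noteq> 0" using four(1) k1(1) by (simp only: mult_eq_0_iff) blast
    moreover have "v (4 * of_int (k+1) :: 'a) \<ge> 2"
      using V_mult[OF V four(1) k1(1)] four k1 by linarith
    ultimately have "v (4 * (of_int k + 1) :: 'a) \<ge> 2" "(4 * (of_int k + 1) :: 'a) \<noteq> 0" by simp_all
    then have e: "v (- (of_int c * (4 * (of_int k + 1))) :: 'a) \<ge> 2"
        "(- (of_int c * (4 * (of_int k + 1))) :: 'a) \<noteq> 0"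
      using V_mult[OF V c0(1), of "4 * (of_int k + 1)"] c0 V_uminus[OF V, of "of_int c * (4 * (of_int k + 1))"]
      by auto
    have "2 * t + (- (of_int c * (4 * (of_int k + 1)))) \<noteq> 0 \<and> v (2 * t + (- (of_int c * (4 * (of_int k + 1))))) = 3/2"
      using V_strict[OF V v2t(2) e(2)] v2t e by simp
    then show ?thesis using d by (simp add: add.commute)
  qed
  have prod: "(x + y) * (x - y) = x^2 - y^2" by (simp add: power2_eq_square algebra_simps)
  have anz: "x + y \<noteq> 0" and bnz: "x - y \<noteq> 0" using prod dv by auto
  have S: "v (x + y) + v (x - y) = 3/2" using V_mult[OF V anz bnz] prod dv by simp
  have ab: "(x + y) - (x - y) = 2 * y" by simp
  have va: "v (x + y) = 3/4"
    using V_split[OF V anz bnz _ S] ab v2y by simp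
  have eq: "s1 * \<alpha> + s2 * (\<alpha> * \<beta>) + s3 * \<beta> = x + y" unfolding x_def y_def by simp
  show ?thesis using eq anz va by simp
qed

end
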